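(* Let $K$ be a planar convex body. There exists $\alpha_K\le\frac12$ such that: - $K_\alpha$ is strictly convex with nonempty interior for $0<\alpha<\alpha_K$; - $K_{\alpha_K}$ is a single point; - $K_\alpha$ is empty for $\alpha_K<\alpha<1$.
   Context: $K$ is a compact convex subset of the Euclidean plane with nonempty interior; $|K|$ is its area. Write $u(\theta)=(\cos\theta,\sin\theta)$ and $u^\perp(\theta)=(-\sin\theta,\cos\theta)$. For an oriented line $\Delta$ of direction $\theta$ through $p$: - $\Delta^+=\{x:\langle x-p,u^\perp(\theta)\rangle\ge0\}$ is its closed left half-plane; - $\Delta^-$ is its closed right half-plane. For $\alpha\in\,]0,1[$, an $\alpha$-section is an oriented line with $|\Delta^-\cap K|=\alpha|K|$. $\Delta(\alpha,\theta)$ denotes the unique $\alpha$-section of direction $\theta$. The $\alpha$-core is $K_\alpha=\bigcap_{\theta}\Delta^+(\alpha,\theta)$. A strictly convex set is a convex set whose boundary contains no nondegenerate segment. *)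

theory Defs
  imports "HOL-Analysis.Analysis"
begin

definition dir :: "real \<Rightarrow> real^2" where
  "dir \<theta> = vector [cos \<theta>, sin \<theta>]"

definition dirperp :: "real \<Rightarrow> real^2" where
  "dirperp \<theta> = vector [- sin \<theta>, cos \<theta>]"

definition left_hp :: "real^2 \<Rightarrow> real \<Rightarrow> (real^2) set" where
  "left_hp p \<theta> = {x. inner (x - p) (dirperp \<theta>) \<ge> 0}"

definition right_hp :: "real^2 \<Rightarrow> real \<Rightarrow> (real^2) set" where
  "right_hp p \<theta> = {x. inner (x - p) (dirperp \<theta>) \<le> 0}"

text \<open>An oriented line of direction \<theta> is determined by its offset
  \<open>t = \<langle>p, u\<^sup>\<perp>(\<theta>)\<rangle>\<close>; we represent it by the point \<open>t \<cdot> u\<^sup>\<perp>(\<theta>)\<close>.\<close>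
definition is_alpha_section :: "(real^2) set \<Rightarrow> real \<Rightarrow> real^2 \<Rightarrow> real \<Rightarrow> bool" where
  "is_alpha_section K \<alpha> p \<theta> \<longleftrightarrow>
     measure lebesgue (right_hp p \<theta> \<inter> K) = \<alpha> * measure lebesgue K"

definition section_offset :: "(real^2) set \<Rightarrow> real \<Rightarrow> real \<Rightarrow> real" where
  "section_offset K \<alpha> \<theta> = (THE t. is_alpha_section K \<alpha> (t *\<^sub>R dirperp \<theta>) \<theta>)"

definition alpha_core :: "(real^2) set \<Rightarrow> real \<Rightarrow> (real^2) set" where
  "alpha_core K \<alpha> = (\<Inter>\<theta>. left_hp (section_offset K \<alpha> \<theta> *\<^sub>R dirperp \<theta>) \<theta>)"

definition strictly_convex :: "(real^2) set \<Rightarrow> bool" where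
  "strictly_convex S \<longleftrightarrow> convex S \<and>
     (\<forall>a b. a \<noteq> b \<longrightarrow> \<not> closed_segment a b \<subseteq> frontier S)"

end

theory Submission
  imports Defs
begin


lemma inner2: "inner (x::real^2) y = x$1*y$1 + x$2*y$2"
  by (simp add: inner_vec_def sum_2)

lemma norm2sq: "(norm (x::real^2))^2 = x$1^2 + x$2^2"
  by (simp add: norm_eq_sqrt_inner inner2 power2_eq_square)

definition perp :: "real^2 \<Rightarrow> real^2" where "perp v = vector [- v$2, v$1]"

lemma expand2:
  fixes v x :: "real^2" assumes "norm v = 1" and w: "w = perp v \<or> w = - perp v"
  shows "x = inner x w *\<^sub>R w + inner x v *\<^sub>R v"
proof -
  have h: "v$1^2 + v$2^2 = 1" using assms norm2sq[of v] by simp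
  have e1: "x$1 = (x$1 * v$1 + x$2 * v$2) * v$1 + (x$2 * v$1 - x$1 * v$2) * (- v$2)"
  proof -
    have "(x$1 * v$1 + x$2 * v$2) * v$1 + (x$2 * v$1 - x$1 * v$2) * (- v$2) = x$1 * (v$1^2 + v$2^2)"
      by (simp add: algebra_simps power2_eq_square)
    then show ?thesis using h by simp
  qed
  have e2: "x$2 = (x$1 * v$1 + x$2 * v$2) * v$2 + (x$2 * v$1 - x$1 * v$2) * v$1"
  proof -
    have "(x$1 * v$1 + x$2 * v$2) * v$2 + (x$2 * v$1 - x$1 * v$2) * v$1 = x$2 * (v$1^2 + v$2^2)"
      by (simp add: algebra_simps power2_eq_square)
    then show ?thesis using h by simp
  qed
  show ?thesis using w e1 e2
    by (auto simp: vec_eq_iff forall_2 inner2 perp_def algebra_simps)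
qed

lemma perp_props: fixes v :: "real^2" assumes "norm v = 1" and w: "w = perp v \<or> w = - perp v"
  shows "norm w = 1" "inner w v = 0" "inner v w = 0" "\<bar>w$1 * v$2 - w$2 * v$1\<bar> = 1"
proof -
  have h: "v$1^2 + v$2^2 = 1" using assms norm2sq[of v] by simp
  have "(norm w)^2 = v$1^2 + v$2^2" using w by (auto simp: norm2sq perp_def)
  then show "norm w = 1" using h norm_ge_zero[of w] by (auto simp: power2_eq_1_iff)
  show "inner w v = 0" "inner v w = 0" using w by (auto simp: inner2 perp_def)
  have "w$1 * v$2 - w$2 * v$1 = - (v$1^2 + v$2^2) \<or> w$1 * v$2 - w$2 * v$1 = (v$1^2 + v$2^2)"
    using w by (auto simp: perp_def power2_eq_square)
  then show "\<bar>w$1 * v$2 - w$2 * v$1\<bar> = 1" using h by auto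
qed

lemma tri_measure: "measure lebesgue (convex hull {a, a+X, a+Y::real^2}) = \<bar>X$1 * Y$2 - X$2 * Y$1\<bar>/2"
proof -
  have c: "compact (convex hull {a, a+X, a+Y})" by (simp add: finite_imp_compact_convex_hull)
  then have "measure lebesgue (convex hull {a, a+X, a+Y}) = measure lborel (convex hull {a, a+X, a+Y})"
    by (intro measure_completion) (auto dest: compact_imp_closed)
  also have "\<dots> = \<bar>X$1 * Y$2 - X$2 * Y$1\<bar>/2"
    unfolding content_triangle by (simp add: abs_minus_commute mult.commute)
  finally show ?thesis .
qed

lemma tri_lmeas: "convex hull {a, b, c::real^2} \<in> lmeasurable"
  by (intro lmeasurable_compact finite_imp_compact_convex_hull) auto

lemma in_tri: "0 \<le> l1 \<Longrightarrow> 0 \<le> l2 \<Longrightarrow> l1 + l2 \<le> 1 \<Longrightarrow>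
   a + l1 *\<^sub>R X + l2 *\<^sub>R Y \<in> convex hull {a, a+X, a+(Y::real^2)}"
  unfolding convex_hull_3
  by (rule CollectI, rule exI[of _ "1 - l1 - l2"], rule exI[of _ l1], rule exI[of _ l2])
     (auto simp: algebra_simps)

lemma tri_in: "x \<in> convex hull {a, a+X, a+(Y::real^2)} \<Longrightarrow>
   \<exists>l1 l2. 0 \<le> l1 \<and> 0 \<le> l2 \<and> l1 + l2 \<le> 1 \<and> x = a + l1 *\<^sub>R X + l2 *\<^sub>R Y"
  unfolding convex_hull_3
proof clarify
  fix u v w :: real assume h: "0 \<le> u" "0 \<le> v" "0 \<le> w" "u + v + w = 1"
  have "u *\<^sub>R a + v *\<^sub>R (a + X) + w *\<^sub>R (a + Y) = (u+v+w) *\<^sub>R a + v *\<^sub>R X + w *\<^sub>R Y"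
    by (simp add: scaleR_add_right scaleR_add_left)
  also have "\<dots> = a + v *\<^sub>R X + w *\<^sub>R Y" using h by simp
  finally show "\<exists>l1 l2. 0 \<le> l1 \<and> 0 \<le> l2 \<and> l1 + l2 \<le> 1 \<and> u *\<^sub>R a + v *\<^sub>R (a + X) + w *\<^sub>R (a + Y) = a + l1 *\<^sub>R X + l2 *\<^sub>R Y"
    using h by (intro exI[of _ v] exI[of _ w]) auto
qed

lemma norm_dirperp: "norm (dirperp th) = 1"
proof -
  have "(norm (dirperp th))^2 = 1" by (simp add: norm2sq dirperp_def)
  then show ?thesis using norm_ge_zero[of "dirperp th"] by (auto simp: power2_eq_1_iff)
qed

lemma dirperp_onto: assumes "norm (v::real^2) = 1" shows "\<exists>th. dirperp th = v"
proof -
  have "(v$2)^2 + (- v$1)^2 = 1" using assms norm2sq[of v] by simp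
  then obtain t where "v$2 = cos t" "- v$1 = sin t" by (rule sincos_total_2pi)
  then have "dirperp t = v" by (auto simp: dirperp_def vec_eq_iff forall_2)
  then show ?thesis by blast
qed

lemma ball_meas_pos: "r > 0 \<Longrightarrow> measure lebesgue (ball (c::real^2) r) > 0"
proof -
  assume r: "r > 0"
  have "measure lebesgue (ball c r) = measure lborel (ball c r)"
    by (intro measure_completion) auto
  then show ?thesis using content_ball_pos[OF r, of c] by simp
qed

locale cbody =
  fixes K :: "(real^2) set"
  assumes cK: "compact K" and vK: "convex K" and iK: "interior K \<noteq> {}"
begin

definition "A = measure lebesgue K"
definition "F v t = measure lebesgue (K \<inter> {x. inner x v \<le> t})"
definition "Rad = (SOME R. R > 0 \<and> (\<forall>x\<in>K. norm x \<le> R))"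

lemma Rad: "Rad > 0" "x \<in> K \<Longrightarrow> norm x \<le> Rad"
proof -
  have "\<exists>R. R > 0 \<and> (\<forall>x\<in>K. norm x \<le> R)" using compact_imp_bounded[OF cK] bounded_pos by blast
  then have "Rad > 0 \<and> (\<forall>x\<in>K. norm x \<le> Rad)" unfolding Rad_def by (rule someI_ex)
  then show "Rad > 0" "x \<in> K \<Longrightarrow> norm x \<le> Rad" by auto
qed

lemma inner_bound: "x \<in> K \<Longrightarrow> norm v = 1 \<Longrightarrow> \<bar>inner x v\<bar> \<le> Rad"
  using Cauchy_Schwarz_ineq2[of x v] Rad(2)[of x] by simp

lemma closed_hs: "closed {x::real^2. inner x v \<le> t}"
  using closed_halfspace_le[of v t] by (simp add: inner_commute)

lemma Kmeas: "K \<in> lmeasurable" by (rule lmeasurable_compact[OF cK])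

lemma hK_meas: "K \<inter> {x. inner x v \<le> t} \<in> lmeasurable"
  by (intro lmeasurable_compact compact_Int_closed cK closed_hs)

lemma meas_le_A: "S \<subseteq> K \<Longrightarrow> S \<in> sets lebesgue \<Longrightarrow> measure lebesgue S \<le> A"
  unfolding A_def using Kmeas by (intro measure_mono_fmeasurable) auto

lemma ball_in_K: obtains c r where "r > 0" "cball c r \<subseteq> K"
  using iK mem_interior_cball by blast

lemma A_pos: "A > 0"
proof -
  obtain c r where r: "r > 0" "cball c r \<subseteq> K" by (rule ball_in_K)
  have "measure lebesgue (ball c r) \<le> A"
    using r ball_subset_cball by (intro meas_le_A) auto
  then show ?thesis using ball_meas_pos[OF r(1), of c] by (metis less_le_trans)
qed

lemma F_mono: "t \<le> t' \<Longrightarrow> F v t \<le> F v t'"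
  unfolding F_def using hK_meas by (intro measure_mono_fmeasurable) auto

lemma F_le_A: "F v t \<le> A" unfolding F_def using hK_meas by (intro meas_le_A) auto

lemma F_nonneg: "F v t \<ge> 0" unfolding F_def by simp

lemma F_empty: "(\<forall>x\<in>K. t < inner x v) \<Longrightarrow> F v t = 0"
proof -
  assume "\<forall>x\<in>K. t < inner x v"
  then have "K \<inter> {x. inner x v \<le> t} = {}" by force
  then show ?thesis by (simp add: F_def)
qed

lemma F_full: "(\<forall>x\<in>K. inner x v \<le> t) \<Longrightarrow> F v t = A"
proof -
  assume "\<forall>x\<in>K. inner x v \<le> t"
  then have "K \<inter> {x. inner x v \<le> t} = K" by force
  then show ?thesis by (simp add: F_def A_def)
qed

lemma slab_eq: "K \<inter> {x. t < inner x v \<and> inner x v \<le> t'} = (K \<inter> {x. inner x v \<le> t'}) - (K \<inter> {x. inner x v \<le> t})"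
  by auto

lemma slab_meas: "K \<inter> {x. t < inner x v \<and> inner x v \<le> t'} \<in> lmeasurable"
  unfolding slab_eq using hK_meas by (intro fmeasurable_Diff) auto

lemma F_diff: "t \<le> t' \<Longrightarrow> F v t' - F v t = measure lebesgue (K \<inter> {x. t < inner x v \<and> inner x v \<le> t'})"
proof -
  assume tt: "t \<le> t'"
  have "measure lebesgue ((K \<inter> {x. inner x v \<le> t'}) - (K \<inter> {x. inner x v \<le> t})) =
     measure lebesgue (K \<inter> {x. inner x v \<le> t'}) - measure lebesgue (K \<inter> {x. inner x v \<le> t})"
    by (intro measure_Diff fmeasurableD2[OF hK_meas] fmeasurableD[OF hK_meas]) (use tt fmeasurableD2[OF hK_meas[of v t']] in auto)
  then show ?thesis unfolding slab_eq F_def by simp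
qed

lemma slab_le:
  assumes v: "norm v = 1" and tt: "t \<le> t'"
  shows "measure lebesgue (K \<inter> {x. t < inner x v \<and> inner x v \<le> t'}) \<le> 2*Rad*(t'-t)"
proof (cases "t = t'")
  case True
  then have "K \<inter> {x. t < inner x v \<and> inner x v \<le> t'} = {}" by auto
  then show ?thesis using True by simp
next
  case False
  with tt have lt: "t < t'" by simp
  define w where "w = perp v"
  have w: "w = perp v \<or> w = - perp v" by (simp add: w_def)
  note pp = perp_props[OF v w]
  define P where "P = t *\<^sub>R v - Rad *\<^sub>R w"
  define X where "X = (2*Rad) *\<^sub>R w"
  define Y where "Y = (t'-t) *\<^sub>R v"
  define Q where "Q = P + X + Y"
  define T1 where "T1 = convex hull {P, P+X, P+Y}"
  define T2 where "T2 = convex hull {Q, Q+(-Y), Q+(-X)}"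
  have sub: "K \<inter> {x. t < inner x v \<and> inner x v \<le> t'} \<subseteq> T1 \<union> T2"
  proof
    fix x assume x: "x \<in> K \<inter> {x. t < inner x v \<and> inner x v \<le> t'}"
    have iw: "\<bar>inner x w\<bar> \<le> Rad" using x pp(1) inner_bound by auto
    define a where "a = (inner x w + Rad)/(2*Rad)"
    define b where "b = (inner x v - t)/(t'-t)"
    have a01: "0 \<le> a" "a \<le> 1" using iw Rad(1) by (auto simp: a_def field_simps)
    have b01: "0 \<le> b" "b \<le> 1" using x lt by (auto simp: b_def field_simps)
    have aa: "a * (2*Rad) = inner x w + Rad" using Rad(1) by (simp add: a_def)
    have bb: "b * (t'-t) = inner x v - t" using lt by (simp add: b_def)
    have xe: "x = P + a *\<^sub>R X + b *\<^sub>R Y"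
    proof -
      have "P + a *\<^sub>R X + b *\<^sub>R Y = (a * (2*Rad) - Rad) *\<^sub>R w + (t + b * (t'-t)) *\<^sub>R v"
        by (simp add: P_def X_def Y_def algebra_simps)
      also have "\<dots> = inner x w *\<^sub>R w + inner x v *\<^sub>R v" by (simp add: aa bb)
      finally show ?thesis using expand2[OF v w, of x] by simp
    qed
    show "x \<in> T1 \<union> T2"
    proof (cases "a + b \<le> 1")
      case True
      then show ?thesis unfolding T1_def xe using a01 b01 in_tri[of a b P X Y] by auto
    next
      case False
      have "x = Q + (1-b) *\<^sub>R (-Y) + (1-a) *\<^sub>R (-X)"
        unfolding xe Q_def by (simp add: algebra_simps)
      then show ?thesis unfolding T2_def using a01 b01 False in_tri[of "1-b" "1-a" Q "-Y" "-X"] by auto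
    qed
  qed
  have d1: "X$1 * Y$2 - X$2 * Y$1 = (2*Rad*(t'-t)) * (w$1 * v$2 - w$2 * v$1)"
    by (simp add: X_def Y_def algebra_simps)
  have m1: "measure lebesgue T1 = Rad*(t'-t)"
    unfolding T1_def tri_measure d1 abs_mult pp(4) using Rad(1) lt by simp
  have d2: "(-Y)$1 * (-X)$2 - (-Y)$2 * (-X)$1 = - ((2*Rad*(t'-t)) * (w$1 * v$2 - w$2 * v$1))"
    by (simp add: X_def Y_def algebra_simps)
  have m2: "measure lebesgue T2 = Rad*(t'-t)"
    unfolding T2_def tri_measure d2 abs_minus_cancel abs_mult pp(4) using Rad(1) lt by simp
  have "measure lebesgue (K \<inter> {x. t < inner x v \<and> inner x v \<le> t'}) \<le> measure lebesgue (T1 \<union> T2)"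
    using sub slab_meas tri_lmeas unfolding T1_def T2_def
    by (intro measure_mono_fmeasurable) (auto intro: fmeasurable.Un)
  also have "\<dots> \<le> measure lebesgue T1 + measure lebesgue T2"
    using tri_lmeas unfolding T1_def T2_def by (intro measure_Un_le) auto
  finally show ?thesis using m1 m2 by simp
qed

lemma F_lip: "norm v = 1 \<Longrightarrow> t \<le> t' \<Longrightarrow> F v t' \<le> F v t + 2*Rad*(t'-t)"
  using F_diff[of t t' v] slab_le[of v t t'] by simp

lemma F_cont: assumes v: "norm v = 1" shows "continuous_on UNIV (F v)"
proof -
  have "isCont (F v) t" for t
  proof (rule continuous_at_eps_delta[THEN iffD2], intro allI impI)
    fix e :: real assume e: "e > 0"
    show "\<exists>d>0. \<forall>x'. dist x' t < d \<longrightarrow> dist (F v x') (F v t) < e"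
    proof (intro exI[of _ "e/(2*Rad+1)"] conjI allI impI)
      show "e/(2*Rad+1) > 0" using e Rad(1) by simp
      fix x' assume d: "dist x' t < e/(2*Rad+1)"
      have "\<bar>F v x' - F v t\<bar> \<le> 2*Rad*\<bar>x' - t\<bar>"
        using F_lip[OF v, of x' t] F_lip[OF v, of t x'] F_mono[of x' t v] F_mono[of t x' v]
        by (cases "x' \<le> t") (auto simp: abs_if)
      also have "\<dots> \<le> 2*Rad*(e/(2*Rad+1))" using d Rad(1) by (intro mult_left_mono) (auto simp: dist_real_def)
      also have "\<dots> < e" using e Rad(1) by (simp add: field_simps)
      finally show "dist (F v x') (F v t) < e" by (simp add: dist_real_def)
    qed
  qed
  then show ?thesis by (simp add: continuous_at_imp_continuous_on)
qed

lemma F_strict: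
  assumes v: "norm v = 1" and tt: "t < t'" and p: "0 < F v t" and q: "F v t' < A"
  shows "F v t < F v t'"
proof -
  obtain x1 where x1: "x1 \<in> K" "inner x1 v \<le> t"
    using p F_empty[of t v] by force
  obtain x2 where x2: "x2 \<in> K" "inner x2 v > t'"
    using q F_full[of v t'] by force
  define s where "s = (t + t')/2"
  define l where "l = (s - inner x1 v)/(inner x2 v - inner x1 v)"
  have l01: "0 \<le> l" "l \<le> 1" using x1 x2 tt by (auto simp: l_def s_def field_simps)
  define y where "y = (1 - l) *\<^sub>R x1 + l *\<^sub>R x2"
  have yK: "y \<in> K" unfolding y_def using l01 x1 x2 by (intro convexD[OF vK]) auto
  have ys: "inner y v = s"
  proof -
    have "inner y v = inner x1 v + l * (inner x2 v - inner x1 v)"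
      by (simp add: y_def inner_add_left algebra_simps)
    also have "\<dots> = s" using x1 x2 tt by (simp add: l_def)
    finally show ?thesis .
  qed
  obtain c r where r: "r > 0" "cball c r \<subseteq> K" by (rule ball_in_K)
  define d where "d = (t' - t)/2"
  define M where "M = norm (c - y) + r"
  define mu where "mu = min (1/2) (d/(M+1))"
  have d: "d > 0" using tt by (simp add: d_def)
  have M: "M > 0" using r norm_ge_zero[of "c - y"] unfolding M_def by linarith
  have mu: "0 < mu" "mu \<le> 1/2" "mu * M < d"
  proof -
    show "0 < mu" using d M by (auto simp: mu_def)
    show "mu \<le> 1/2" unfolding mu_def by (rule min.cobounded1)
    have "mu * M \<le> d/(M+1) * M" using M by (intro mult_right_mono) (auto simp: mu_def)
    also have "\<dots> < d" using d M by (simp add: field_simps)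
    finally show "mu * M < d" .
  qed
  define B where "B = ball (y + mu *\<^sub>R (c - y)) (mu * r)"
  have Bsub: "B \<subseteq> K \<inter> {x. t < inner x v \<and> inner x v \<le> t'}"
  proof
    fix q assume qB: "q \<in> B"
    define z where "z = y + (1/mu) *\<^sub>R (q - y)"
    have qz: "q = (1 - mu) *\<^sub>R y + mu *\<^sub>R z" using mu by (simp add: z_def algebra_simps)
    have "z - c = (1/mu) *\<^sub>R (q - (y + mu *\<^sub>R (c - y)))" using mu by (simp add: z_def algebra_simps)
    then have "norm (z - c) = (1/mu) * norm (q - (y + mu *\<^sub>R (c - y)))" using mu by simp
    also have "\<dots> < (1/mu) * (mu * r)" using qB mu by (intro mult_strict_left_mono) (auto simp: B_def dist_norm norm_minus_commute)
    also have "\<dots> = r" using mu by simp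
    finally have "z \<in> cball c r" by (simp add: dist_norm norm_minus_commute)
    then have zK: "z \<in> K" using r by auto
    have qK: "q \<in> K" unfolding qz using mu zK yK by (intro convexD[OF vK]) auto
    have "norm (q - y) \<le> norm (q - (y + mu *\<^sub>R (c - y))) + norm (mu *\<^sub>R (c - y))"
    proof -
      have "q - y = (q - (y + mu *\<^sub>R (c - y))) + mu *\<^sub>R (c - y)" by simp
      then show ?thesis by (metis norm_triangle_ineq)
    qed
    also have "\<dots> \<le> mu * r + mu * norm (c - y)" using qB mu by (intro add_mono) (auto simp: B_def dist_norm norm_minus_commute)
    also have "\<dots> = mu * M" by (simp add: M_def algebra_simps)
    finally have "norm (q - y) < d" using mu by simp
    then have "\<bar>inner (q - y) v\<bar> < d" using Cauchy_Schwarz_ineq2[of "q - y" v] v by simp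
    then have "\<bar>inner q v - s\<bar> < d" using ys by (simp add: inner_diff_left)
    then have "inner q v - s < d" "s - inner q v < d" by (auto simp: abs_less_iff)
    moreover have "2*d = t' - t" "2 * s = t+t'" by (simp_all add: d_def s_def)
    ultimately have "t < inner q v \<and> inner q v \<le> t'" by (intro conjI; linarith)
    then show "q \<in> K \<inter> {x. t < inner x v \<and> inner x v \<le> t'}" using qK by auto
  qed
  have "0 < measure lebesgue B" unfolding B_def using mu r by (intro ball_meas_pos) simp
  also have "\<dots> \<le> measure lebesgue (K \<inter> {x. t < inner x v \<and> inner x v \<le> t'})"
    using Bsub slab_meas by (intro measure_mono_fmeasurable) (auto simp: B_def)
  also have "\<dots> = F v t' - F v t" using F_diff[of t t' v] tt by simp
  finally show ?thesis by simp
qed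

lemma offset_ex1: assumes v: "norm v = 1" and a: "0 < a" "a < 1" shows "\<exists>!t. F v t = a * A"
proof (rule ex_ex1I)
  have "F v (- Rad - 1) = 0"
    by (rule F_empty) (use inner_bound v in \<open>force simp: abs_le_iff\<close>)
  moreover have "F v Rad = A"
    by (rule F_full) (use inner_bound v in \<open>force simp: abs_le_iff\<close>)
  ultimately show "\<exists>t. F v t = a * A"
    using IVT'[of "F v" "- Rad - 1" "a * A" Rad] a A_pos Rad(1)
      continuous_on_subset[OF F_cont[OF v]] by (force simp: mult_le_cancel_right1)
next
  fix t1 t2 assume h: "F v t1 = a * A" "F v t2 = a * A"
  have aA: "0 < a * A" "a * A < A" using a A_pos by auto
  show "t1 = t2"
  proof (rule ccontr)
    assume "t1 \<noteq> t2"
    then consider "t1 < t2" | "t2 < t1" by linarith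
    then show False
      using F_strict[OF v, of t1 t2] F_strict[OF v, of t2 t1] h aA by cases auto
  qed
qed

lemma F_ge_iff: assumes v: "norm v = 1" and a: "0 < a" "a < 1" and h: "F v h = a * A"
  shows "a * A \<le> F v s \<longleftrightarrow> h \<le> s"
proof
  assume s: "a * A \<le> F v s"
  show "h \<le> s"
  proof (rule ccontr)
    assume "\<not> h \<le> s"
    moreover have "0 < F v s" using a A_pos s by (smt (verit) mult_pos_pos)
    ultimately have "F v s < F v h" using a A_pos h by (intro F_strict[OF v]) auto
    then show False using s h by simp
  qed
next
  assume "h \<le> s" then show "a * A \<le> F v s" using F_mono[of h s v] h by simp
qed

lemma core_char: assumes a: "0 < a" "a < 1"
  shows "alpha_core K a = {x. \<forall>v. norm v = 1 \<longrightarrow> a * A \<le> F v (inner x v)}"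
proof -
  have so: "F (dirperp th) (section_offset K a th) = a * A" for th
  proof -
    have eq: "is_alpha_section K a (t *\<^sub>R dirperp th) th \<longleftrightarrow> F (dirperp th) t = a * A" for t
    proof -
      have "right_hp (t *\<^sub>R dirperp th) th = {x. inner x (dirperp th) \<le> t}"
        using norm_dirperp[of th] by (auto simp: right_hp_def inner_diff_left dot_square_norm)
      then show ?thesis by (simp add: is_alpha_section_def F_def A_def Int_commute)
    qed
    show ?thesis unfolding section_offset_def eq
      by (rule theI'[OF offset_ex1[OF norm_dirperp a]])
  qed
  have lh: "left_hp (t *\<^sub>R dirperp th) th = {x. t \<le> inner x (dirperp th)}" for t th
    using norm_dirperp[of th] by (auto simp: left_hp_def inner_diff_left dot_square_norm)
  have "x \<in> alpha_core K a \<longleftrightarrow> (\<forall>v. norm v = 1 \<longrightarrow> a * A \<le> F v (inner x v))" for x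
  proof -
    have "x \<in> alpha_core K a \<longleftrightarrow> (\<forall>th. section_offset K a th \<le> inner x (dirperp th))"
      by (simp add: alpha_core_def lh)
    also have "\<dots> \<longleftrightarrow> (\<forall>th. a * A \<le> F (dirperp th) (inner x (dirperp th)))"
      using F_ge_iff[OF norm_dirperp a so] by simp
    also have "\<dots> \<longleftrightarrow> (\<forall>v. norm v = 1 \<longrightarrow> a * A \<le> F v (inner x v))"
      using dirperp_onto norm_dirperp by metis
    finally show ?thesis .
  qed
  then show ?thesis by auto
qed

definition "core a = {x. \<forall>v. norm v = 1 \<longrightarrow> a * A \<le> F v (inner x v)}"

lemma core_eq: "0 < a \<Longrightarrow> a < 1 \<Longrightarrow> alpha_core K a = core a"
  unfolding core_def by (rule core_char)

lemma core_closed: "closed (core a)"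
proof -
  have "core a = (\<Inter>v\<in>{v. norm v = 1}. {x. a * A \<le> F v (inner x v)})"
    by (auto simp: core_def)
  moreover have "closed {x. a * A \<le> F v (inner x v)}" if v: "norm v = 1" for v
  proof -
    have "continuous_on UNIV (\<lambda>x. F v (inner x v))"
      by (rule continuous_on_compose2[of UNIV "F v"]) (auto intro: F_cont[OF v] continuous_intros)
    then show ?thesis by (intro closed_Collect_le) (auto intro: continuous_intros)
  qed
  ultimately show ?thesis by auto
qed

lemma core_convex: "convex (core a)"
proof -
  have "convex {x. a * A \<le> F v (inner x v)}" for v
  proof (rule convexI)
    fix x y :: "real^2" and u w :: real assume x: "x \<in> {x. a * A \<le> F v (inner x v)}" and y: "y \<in> {x. a * A \<le> F v (inner x v)}"
      and u: "0 \<le> u" "0 \<le> w" "u + w = 1"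
    have "inner (u *\<^sub>R x + w *\<^sub>R y) v = u * inner x v + w * inner y v" by (simp add: inner_add_left)
    moreover have "u * inner x v + w * inner y v \<ge> min (inner x v) (inner y v)"
    proof -
      have "u * inner x v \<ge> u * min (inner x v) (inner y v)" "w * inner y v \<ge> w * min (inner x v) (inner y v)"
        using u by (auto intro: mult_left_mono)
      then have "(u + w) * min (inner x v) (inner y v) \<le> u * inner x v + w * inner y v"
        by (simp add: distrib_right)
      then show ?thesis using u(3) by simp
    qed
    ultimately have "F v (min (inner x v) (inner y v)) \<le> F v (inner (u *\<^sub>R x + w *\<^sub>R y) v)"
      by (intro F_mono) simp
    moreover have "a * A \<le> F v (min (inner x v) (inner y v))" using x y by (cases "inner x v \<le> inner y v") (auto simp: min_def)
    ultimately show "u *\<^sub>R x + w *\<^sub>R y \<in> {x. a * A \<le> F v (inner x v)}" by simp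
  qed
  moreover have "core a = (\<Inter>v\<in>{v. norm v = 1}. {x. a * A \<le> F v (inner x v)})"
    by (auto simp: core_def)
  ultimately show ?thesis by (auto intro: convex_INT)
qed

lemma core_mono: "a \<le> b \<Longrightarrow> core b \<subseteq> core a"
  unfolding core_def using A_pos by (auto intro: order.trans[OF mult_right_mono])

lemma core_sub_K: assumes a: "0 < a" shows "core a \<subseteq> K"
proof
  fix x assume x: "x \<in> core a"
  show "x \<in> K"
  proof (rule ccontr)
    assume nx: "x \<notin> K"
    obtain p b where pb: "inner p x < b" "\<forall>y\<in>K. inner p y > b"
      using separating_hyperplane_closed_point[OF vK compact_imp_closed[OF cK] nx] by blast
    obtain c r where r: "r > 0" "cball c r \<subseteq> K" by (rule ball_in_K)
    have "c \<in> K" using r by auto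
    then have p0: "p \<noteq> 0" using pb by auto
    define v where "v = (1 / norm p) *\<^sub>R p"
    have v: "norm v = 1" using p0 by (simp add: v_def)
    have "\<forall>y\<in>K. inner x v < inner y v"
    proof
      fix y assume "y \<in> K"
      then have "inner p x < inner p y" using pb by force
      then show "inner x v < inner y v" using p0 by (simp add: v_def inner_commute divide_strict_right_mono)
    qed
    then have "F v (inner x v) = 0" by (rule F_empty)
    moreover have "a * A \<le> F v (inner x v)" using x v by (auto simp: core_def)
    ultimately show False using a A_pos by (simp add: mult_le_0_iff)
  qed
qed

lemma core_half: assumes a: "1/2 < a" shows "core a = {}"
proof (rule ccontr)
  assume "core a \<noteq> {}"
  then obtain x where x: "x \<in> core a" by auto
  obtain v :: "real^2" where v: "norm v = 1" using norm_axis_1 by blast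
  have nv: "norm (- v) = 1" using v by simp
  define s where "s = inner x v"
  have h1: "a * A \<le> F v s" using x v by (auto simp: core_def s_def)
  have "a * A \<le> F (- v) (inner x (- v))" using x nv unfolding core_def by blast
  then have h2: "a * A \<le> F (- v) (- s)" by (simp add: s_def)
  define e where "e = (2*a - 1) * A / (4 * Rad)"
  have e: "e > 0" using a A_pos Rad(1) by (simp add: e_def)
  have T: "K \<inter> {y. inner y (- v) \<le> - s} = K \<inter> {y. s \<le> inner y v}" by auto
  have KT: "K - (K \<inter> {y. s \<le> inner y v}) \<in> lmeasurable"
    using fmeasurable_Diff[OF Kmeas fmeasurableD[OF hK_meas[of "-v" "-s"]]] T by simp
  have "F v (s - e) \<le> measure lebesgue (K - (K \<inter> {y. s \<le> inner y v}))"
    unfolding F_def using e KT by (intro measure_mono_fmeasurable) (auto intro: fmeasurableD hK_meas)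
  also have "\<dots> = A - F (- v) (- s)"
    unfolding F_def A_def T[symmetric]
    by (intro measure_Diff fmeasurableD2[OF Kmeas] fmeasurableD[OF hK_meas] fmeasurableD[OF Kmeas]) (use fmeasurableD2[OF Kmeas] in auto)
  finally have "F v (s - e) \<le> A - F (- v) (- s)" .
  moreover have "F v s \<le> F v (s - e) + 2 * Rad * e" using F_lip[OF v, of "s - e" s] e by simp
  moreover have "2 * Rad * e = (2*a - 1) * A / 2" using Rad(1) by (simp add: e_def)
  ultimately have "2 * (a * A) \<le> A + (2*a - 1) * A / 2" using h1 h2 by linarith
  then show False using a A_pos by (simp add: algebra_simps field_simps)
qed

lemma core_gap:
  assumes ab: "a < b" and x: "x \<in> core b"
  shows "cball x ((b - a) * A / (2 * Rad)) \<subseteq> core a"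
proof
  fix y assume y: "y \<in> cball x ((b - a) * A / (2 * Rad))"
  define e where "e = (b - a) * A / (2 * Rad)"
  have ny: "norm (y - x) \<le> e" using y by (simp add: e_def dist_norm norm_minus_commute)
  show "y \<in> core a" unfolding core_def
  proof (intro CollectI allI impI)
    fix v :: "real^2" assume v: "norm v = 1"
    have "\<bar>inner (y - x) v\<bar> \<le> e" using Cauchy_Schwarz_ineq2[of "y - x" v] v ny by simp
    then have iy: "inner x v - e \<le> inner y v" by (simp add: inner_diff_left abs_le_iff)
    have "b * A \<le> F v (inner x v)" using x v by (auto simp: core_def)
    also have "\<dots> \<le> F v (inner x v - e) + 2 * Rad * e"
      using F_lip[OF v, of "inner x v - e" "inner x v"] ny norm_ge_zero[of "y - x"] by simp
    also have "\<dots> \<le> F v (inner y v) + 2 * Rad * e" using F_mono[OF iy] by simp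
    also have "2 * Rad * e = (b - a) * A" using Rad(1) by (simp add: e_def)
    finally show "a * A \<le> F v (inner y v)" by (simp add: algebra_simps)
  qed
qed

lemma core_grow:
  assumes r: "r > 0" "cball c r \<subseteq> K" and v: "norm v = 1"
  shows "F v (inner c v - r/2) + r^2/8 \<le> F v (inner c v)"
proof -
  define w where "w = perp v"
  have w: "w = perp v \<or> w = - perp v" by (simp add: w_def)
  note pp = perp_props[OF v w]
  define X where "X = (- r/4) *\<^sub>R v + (r/2) *\<^sub>R w"
  define Y where "Y = (- r/4) *\<^sub>R v - (r/2) *\<^sub>R w"
  define T where "T = convex hull {c, c + X, c + Y}"
  have "X$1 * Y$2 - X$2 * Y$1 = - (r^2/4) * (w$1 * v$2 - w$2 * v$1)"
    by (simp add: X_def Y_def algebra_simps power2_eq_square)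
  then have mT: "measure lebesgue T = r^2/8" unfolding T_def tri_measure
    by (simp add: abs_mult pp(4))
  have nX: "norm X \<le> 3/4 * r" "norm Y \<le> 3/4 * r"
  proof -
    have "norm X \<le> norm ((- r/4) *\<^sub>R v) + norm ((r/2) *\<^sub>R w)" unfolding X_def by (rule norm_triangle_ineq)
    then show "norm X \<le> 3/4 * r" using v pp(1) r by simp
    have "norm Y \<le> norm ((- r/4) *\<^sub>R v) + norm ((r/2) *\<^sub>R w)" unfolding Y_def by (rule norm_triangle_ineq4)
    then show "norm Y \<le> 3/4 * r" using v pp(1) r by simp
  qed
  have sub: "T \<subseteq> K \<inter> {x. inner c v - r/2 < inner x v \<and> inner x v \<le> inner c v}"
  proof
    fix x assume "x \<in> T"
    then obtain l1 l2 where l: "0 \<le> l1" "0 \<le> l2" "l1 + l2 \<le> 1" "x = c + l1 *\<^sub>R X + l2 *\<^sub>R Y"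
      unfolding T_def using tri_in by blast
    have "norm (l1 *\<^sub>R X + l2 *\<^sub>R Y) \<le> norm (l1 *\<^sub>R X) + norm (l2 *\<^sub>R Y)" by (rule norm_triangle_ineq)
    also have "\<dots> \<le> l1 * (3/4*r) + l2 * (3/4*r)"
      using l nX mult_left_mono[OF nX(1) l(1)] mult_left_mono[OF nX(2) l(2)] by simp
    also have "\<dots> \<le> 3/4*r"
    proof -
      have "(l1 + l2) * (3/4*r) \<le> 1 * (3/4*r)" using l r by (intro mult_right_mono) auto
      then show ?thesis by (simp add: distrib_right)
    qed
    finally have "norm (l1 *\<^sub>R X + l2 *\<^sub>R Y) \<le> r" using r by simp
    moreover have "dist c x = norm (l1 *\<^sub>R X + l2 *\<^sub>R Y)" using l(4) by (simp add: dist_norm norm_minus_commute add.commute)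
    ultimately have "x \<in> cball c r" by simp
    then have xK: "x \<in> K" using r by auto
    have ix: "inner x v = inner c v - (r/4) * (l1 + l2)"
      unfolding l(4) using v pp(2) by (simp add: X_def Y_def inner_add_left inner_diff_left dot_square_norm algebra_simps)
    then show "x \<in> K \<inter> {x. inner c v - r/2 < inner x v \<and> inner x v \<le> inner c v}"
    proof -
      have "(r/4) * (l1 + l2) \<le> (r/4) * 1" using l r by (intro mult_left_mono) auto
      moreover have "0 \<le> (r/4) * (l1 + l2)" using l r by simp
      ultimately show ?thesis using xK ix r(1) by auto
    qed
  qed
  have "r^2/8 \<le> measure lebesgue (K \<inter> {x. inner c v - r/2 < inner x v \<and> inner x v \<le> inner c v})"
    unfolding mT[symmetric] T_def using sub[unfolded T_def] slab_meas
    by (intro measure_mono_fmeasurable) (auto intro: fmeasurableD[OF tri_lmeas])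
  also have "\<dots> = F v (inner c v) - F v (inner c v - r/2)" using F_diff[of "inner c v - r/2" "inner c v" v] r by simp
  finally show ?thesis by simp
qed

end



context cbody begin

lemma rotate_contra:
  assumes a: "0 < a" "a < 1" and v: "norm v = 1" and w: "w = perp v \<or> w = - perp v"
  and p: "p \<in> core a" and Fp: "F v (inner p v) = a * A"
  and e1: "e1 \<in> K" "inner e1 v = inner p v"
  and e1min: "\<forall>x\<in>K. inner x v = inner p v \<longrightarrow> inner e1 w \<le> inner x w"
  and e2: "e2 \<in> K" "inner e2 v = inner p v"
  shows "inner e2 w - inner p w \<le> inner p w - inner e1 w"
proof (rule ccontr)
  assume nc: "\<not> ?thesis"
  note pp = perp_props[OF v w]
  have ww: "inner w w = 1" using pp(1) by (simp add: dot_square_norm)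
  have vv: "inner v v = 1" using v by (simp add: dot_square_norm)
  have pK: "p \<in> K" using p core_sub_K[OF a(1)] by auto
  define rm where "rm = inner p w - inner e1 w"
  define rp where "rp = inner e2 w - inner p w"
  have rm0: "0 \<le> rm" using e1min pK by (auto simp: rm_def)
  have rpm: "rm < rp" using nc by (simp add: rm_def rp_def)
  have exp: "x = p + inner (x - p) w *\<^sub>R w + inner (x - p) v *\<^sub>R v" for x
    using expand2[OF v w, of "x - p"] by (simp add: algebra_simps)
  have inw: "inner (p + s *\<^sub>R w + t *\<^sub>R v - p) w = s" for s t
    using ww pp(3) by (simp add: inner_add_left)
  have inv: "inner (p + s *\<^sub>R w + t *\<^sub>R v - p) v = t" for s t
    using vv pp(2) by (simp add: inner_add_left)
  have e1e: "e1 = p + (- rm) *\<^sub>R w" using exp[of e1] e1(2) by (simp add: rm_def inner_diff_left)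
  have e2e: "e2 = p + rp *\<^sub>R w" using exp[of e2] e2(2) by (simp add: rp_def inner_diff_left)
  have chord: "p + s *\<^sub>R w \<in> K" if "- rm \<le> s" "s \<le> rp" for s
  proof -
    define mu where "mu = (s + rm) / (rm + rp)"
    have mu: "0 \<le> mu" "mu \<le> 1" using that rm0 rpm by (auto simp: mu_def field_simps)
    have "(1 - mu) *\<^sub>R e1 + mu *\<^sub>R e2 = p + (mu * (rm + rp) - rm) *\<^sub>R w"
      unfolding e1e e2e by (simp add: algebra_simps)
    also have "mu * (rm + rp) - rm = s" using rm0 rpm by (simp add: mu_def)
    finally have "p + s *\<^sub>R w = (1 - mu) *\<^sub>R e1 + mu *\<^sub>R e2" by simp
    then show ?thesis using mu e1(1) e2(1) by (simp add: convexD[OF vK])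
  qed
  have chord_min: "- rm \<le> inner (x - p) w" if "x \<in> K" "inner (x - p) v = 0" for x
    using e1min that by (auto simp: rm_def inner_diff_left)
  obtain z where z: "z \<in> K" "inner (z - p) v < 0"
  proof (rule ccontr)
    assume "\<not> thesis"
    then have nz: "\<forall>z\<in>K. inner (z - p) v \<ge> 0" using that by force
    have "K \<inter> {x. inner x v \<le> inner p v} \<subseteq> {x. inner v x = inner p v}"
    proof
      fix x assume x: "x \<in> K \<inter> {x. inner x v \<le> inner p v}"
      then have "0 \<le> inner (x - p) v" using nz by blast
      then have "inner p v \<le> inner x v" by (simp add: inner_diff_left)
      then have "inner x v = inner p v" using x by simp
      then show "x \<in> {x. inner v x = inner p v}" by (simp add: inner_commute)
    qed
    moreover have "negligible {x. inner v x = inner p v}" using v by (intro negligible_hyperplane) auto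
    ultimately have "negligible (K \<inter> {x. inner x v \<le> inner p v})" by (rule negligible_subset[rotated])
    then have "F v (inner p v) = 0" unfolding F_def by (rule negligible_imp_measure0)
    then show False using Fp a A_pos by simp
  qed
  define d where "d = - inner (z - p) v"
  have d: "d > 0" using z by (simp add: d_def)
  define sz where "sz = inner (z - p) w"
  have ze: "z = p + sz *\<^sub>R w + (- d) *\<^sub>R v" using exp[of z] by (simp add: sz_def d_def)
  define Bd where "Bd = 2 * Rad"
  have Bd: "Bd > 0" using Rad(1) by (simp add: Bd_def)
  have sbound: "\<bar>inner (x - p) w\<bar> \<le> Bd" if "x \<in> K" for x
  proof -
    have "\<bar>inner (x - p) w\<bar> \<le> norm (x - p)" using Cauchy_Schwarz_ineq2[of "x - p" w] pp(1) by simp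
    also have "\<dots> \<le> norm x + norm p" by (rule norm_triangle_ineq4)
    also have "\<dots> \<le> Bd" using Rad(2)[OF that] Rad(2)[OF pK] by (simp add: Bd_def)
    finally show ?thesis .
  qed
  have szB: "\<bar>sz\<bar> \<le> Bd" using sbound[OF z(1)] by (simp add: sz_def)
  define rho where "rho = (rp + rm) / 2"
  define L where "L = (rm + rho) / 2"
  define kap where "kap = (1 + L / rho) / 2"
  have rho: "rm < rho" "rho < rp" "0 < rho" using rm0 rpm by (auto simp: rho_def)
  have L: "rm < L" "L < rho" "0 < L" using rho rm0 by (auto simp: L_def)
  have kap: "0 < kap" "kap < 1" using L rho by (auto simp: kap_def field_simps)
  have kapL: "L^2 < kap * rho^2"
  proof -
    have "L / rho < kap" using L rho by (simp add: kap_def field_simps)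
    then have "(L / rho) * rho^2 < kap * rho^2" using rho by (intro mult_strict_right_mono) auto
    moreover have "(L / rho) * rho^2 = L * rho" using rho by (simp add: power2_eq_square)
    moreover have "L^2 < L * rho" using L by (simp add: power2_eq_square)
    ultimately show ?thesis by linarith
  qed
  define lm where "lm = min (1/2) (min ((rp - rho)/(rp + Bd)) (rho / Bd))"
  have lm: "0 < lm" "lm \<le> 1/2" "lm \<le> (rp - rho)/(rp + Bd)" "lm \<le> rho / Bd"
  proof -
    show "0 < lm" unfolding lm_def using rho Bd by auto
    show "lm \<le> 1/2" unfolding lm_def by (rule min.cobounded1)
    show "lm \<le> (rp - rho)/(rp + Bd)" unfolding lm_def by (intro min.coboundedI2 min.cobounded1)
    show "lm \<le> rho / Bd" unfolding lm_def by (intro min.coboundedI2 min.cobounded2)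
  qed
  define t1 where "t1 = lm * d / (kap * rho)"
  define t4 where "t4 = (L - rm) * d / (2 * Bd^2)"
  define tau where "tau = min t1 t4"
  have tpos: "t1 > 0" "t4 > 0"
    using d kap rho L Bd lm by (auto simp: t1_def t4_def)
  have tau: "0 < tau" "tau \<le> t1" "tau \<le> t4"
    using tpos by (auto simp: tau_def)
  define lam where "lam = kap * tau * rho / d"
  have lam0: "0 < lam" using kap tau rho d by (simp add: lam_def)
  have "lam \<le> kap * t1 * rho / d" unfolding lam_def using tau kap rho d
    by (intro divide_right_mono mult_right_mono mult_left_mono) auto
  also have "kap * t1 * rho / d = lm" using kap rho d by (simp add: t1_def)
  finally have lamlm: "lam \<le> lm" .
  have lam1: "lam \<le> 1/2" using lamlm lm by simp
  have lam2: "lam * (rp + Bd) \<le> rp - rho"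
  proof -
    have "lam * (rp + Bd) \<le> lm * (rp + Bd)" using lamlm rho Bd by (intro mult_right_mono) auto
    also have "\<dots> \<le> rp - rho" using lm(3) rho Bd by (simp add: pos_le_divide_eq)
    finally show ?thesis .
  qed
  have lam3: "lam * Bd \<le> rho"
  proof -
    have "lam * Bd \<le> lm * Bd" using lamlm Bd by (intro mult_right_mono) auto
    also have "\<dots> \<le> rho" using lm(4) Bd by (simp add: pos_le_divide_eq)
    finally show ?thesis .
  qed
  have tau4: "tau * Bd / d * (2 * Bd) \<le> L - rm"
  proof -
    have "tau * Bd / d * (2 * Bd) \<le> t4 * Bd / d * (2 * Bd)" using tau Bd d
      by (intro mult_right_mono divide_right_mono) auto
    also have "\<dots> = L - rm" using Bd d by (simp add: t4_def field_simps power2_eq_square)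
    finally show ?thesis .
  qed
  \<comment> \<open>the triangle T removed\<close>
  define X where "X = rho *\<^sub>R w"
  define Y where "Y = rho *\<^sub>R w - (kap * tau * rho) *\<^sub>R v"
  define T where "T = convex hull {p, p + X, p + Y}"
  have q1K: "p + X \<in> K" unfolding X_def using chord rho rm0 by simp
  have q2K: "p + Y \<in> K"
  proof -
    define sq where "sq = (rho - lam * sz) / (1 - lam)"
    have l1: "0 < 1 - lam" using lam1 by simp
    have sq1: "sq \<le> rp"
    proof -
      have "lam * (rp - sz) \<le> lam * (rp + Bd)" using szB lam0 by (intro mult_left_mono) (auto simp: abs_le_iff)
      then have "lam * (rp - sz) \<le> rp - rho" using lam2 by linarith
      then have "rho - lam * sz \<le> rp * (1 - lam)" by (simp add: algebra_simps)
      then show ?thesis using l1 by (simp add: sq_def pos_divide_le_eq)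
    qed
    have sq0: "0 \<le> sq"
    proof -
      have "lam * sz \<le> lam * Bd" using szB lam0 by (intro mult_left_mono) auto
      then have "0 \<le> rho - lam * sz" using lam3 by simp
      then show ?thesis using l1 by (simp add: sq_def)
    qed
    have qK: "p + sq *\<^sub>R w \<in> K" using chord[of sq] sq0 sq1 rm0 by simp
    have "(1 - lam) *\<^sub>R (p + sq *\<^sub>R w) + lam *\<^sub>R z = p + ((1 - lam) * sq + lam * sz) *\<^sub>R w + (- lam * d) *\<^sub>R v"
      unfolding ze by (simp add: algebra_simps)
    also have "(1 - lam) * sq + lam * sz = rho" using l1 by (simp add: sq_def)
    also have "- lam * d = - (kap * tau * rho)" using d by (simp add: lam_def)
    finally have "p + Y = (1 - lam) *\<^sub>R (p + sq *\<^sub>R w) + lam *\<^sub>R z" by (simp add: Y_def algebra_simps)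
    then show ?thesis using qK z(1) lam0 lam1 by (simp add: convexD[OF vK])
  qed
  have TK: "T \<subseteq> K" unfolding T_def using pK q1K q2K by (intro hull_minimal vK) auto
  have Tu: "inner (x - p) v \<le> 0" if "x \<in> T" for x
  proof -
    obtain l1 l2 where l: "0 \<le> l1" "0 \<le> l2" "l1 + l2 \<le> 1" "x = p + l1 *\<^sub>R X + l2 *\<^sub>R Y"
      using \<open>x \<in> T\<close> unfolding T_def using tri_in by blast
    have "inner (x - p) v = - l2 * kap * tau * rho"
      unfolding l(4) using vv pp(2) pp(3) by (simp add: X_def Y_def inner_add_left inner_diff_left)
    then show ?thesis using l kap tau rho by (simp add: mult_nonneg_nonneg)
  qed
  have mT: "measure lebesgue T = kap * tau * rho^2 / 2"
  proof -
    have "X$1 * Y$2 - X$2 * Y$1 = - (kap * tau * rho^2) * (w$1 * v$2 - w$2 * v$1)"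
      by (simp add: X_def Y_def algebra_simps power2_eq_square)
    then show ?thesis unfolding T_def tri_measure using kap tau rho by (simp add: abs_mult pp(4))
  qed
  \<comment> \<open>the triangle D added\<close>
  define X' where "X' = (- L) *\<^sub>R w"
  define Y' where "Y' = (- L) *\<^sub>R w + (tau * L) *\<^sub>R v"
  define D where "D = convex hull {p, p + X', p + Y'}"
  have mD: "measure lebesgue D = tau * L^2 / 2"
  proof -
    have "X'$1 * Y'$2 - X'$2 * Y'$1 = - (tau * L^2) * (w$1 * v$2 - w$2 * v$1)"
      by (simp add: X'_def Y'_def algebra_simps power2_eq_square)
    then show ?thesis unfolding D_def tri_measure using tau L by (simp add: abs_mult pp(4))
  qed
  define n where "n = v + tau *\<^sub>R w"
  define N where "N = K \<inter> {x. inner x n \<le> inner p n}"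
  define Ob where "Ob = K \<inter> {x. inner x v \<le> inner p v}"
  have innN: "inner (x - p) n = inner (x - p) v + tau * inner (x - p) w" for x
    by (simp add: n_def inner_add_right)
  have Nsub: "N \<subseteq> (Ob - T) \<union> {p} \<union> D"
  proof
    fix x assume xN: "x \<in> N"
    define sx where "sx = inner (x - p) w"
    define ux where "ux = inner (x - p) v"
    have xK: "x \<in> K" using xN by (simp add: N_def)
    have neg: "ux + tau * sx \<le> 0" using xN innN[of x] by (simp add: N_def sx_def ux_def inner_diff_left)
    have xe: "x = p + sx *\<^sub>R w + ux *\<^sub>R v" using exp[of x] by (simp add: sx_def ux_def)
    show "x \<in> (Ob - T) \<union> {p} \<union> D"
    proof (cases "ux \<le> 0")
      case True
      then have xO: "x \<in> Ob" using xK by (simp add: Ob_def ux_def inner_diff_left)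
      show ?thesis
      proof (cases "x \<in> T")
        case False then show ?thesis using xO by simp
      next
        case True
        obtain l1 l2 where l: "0 \<le> l1" "0 \<le> l2" "l1 + l2 \<le> 1" "x = p + l1 *\<^sub>R X + l2 *\<^sub>R Y"
          using True unfolding T_def using tri_in by blast
        have "ux = - l2 * kap * tau * rho"
          unfolding ux_def l(4) using vv pp(2) pp(3) by (simp add: X_def Y_def inner_add_left inner_diff_left)
        moreover have "sx = (l1 + l2) * rho"
          unfolding sx_def l(4) using ww pp(2) pp(3) by (simp add: X_def Y_def inner_add_left inner_diff_left algebra_simps)
        ultimately have "tau * rho * (l1 + (1 - kap) * l2) \<le> 0" using neg by (simp add: algebra_simps)
        then have "l1 + (1 - kap) * l2 \<le> 0" using tau rho by (simp add: mult_le_0_iff)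
        moreover have "0 \<le> (1 - kap) * l2" using kap l by simp
        ultimately have "l1 = 0" "(1 - kap) * l2 = 0" using l by linarith+
        then have "l1 = 0" "l2 = 0" using kap by auto
        then have "x = p" using l(4) by simp
        then show ?thesis by simp
      qed
    next
      case False
      then have ux: "0 < ux" by simp
      have sx: "sx < 0" "ux \<le> - tau * sx"
      proof -
        have "tau * sx < 0" using neg ux by linarith
        then show "sx < 0" using tau by (simp add: mult_less_0_iff)
        show "ux \<le> - tau * sx" using neg by simp
      qed
      have sxL: "- L \<le> sx"
      proof (rule ccontr)
        assume "\<not> - L \<le> sx"
        then have sxl: "sx < - L" by simp
        define mu where "mu = ux / (ux + d)"
        have mu: "0 < mu" "mu < 1" using ux d by (auto simp: mu_def)
        define y where "y = (1 - mu) *\<^sub>R x + mu *\<^sub>R z"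
        have yK: "y \<in> K" unfolding y_def using xK z(1) mu by (intro convexD[OF vK]) auto
        have ye: "y = p + ((1 - mu) * sx + mu * sz) *\<^sub>R w + ((1 - mu) * ux - mu * d) *\<^sub>R v"
        proof -
          have "y = (1 - mu) *\<^sub>R (p + sx *\<^sub>R w + ux *\<^sub>R v) + mu *\<^sub>R (p + sz *\<^sub>R w + (- d) *\<^sub>R v)"
            unfolding y_def using xe ze by simp
          then show ?thesis by (simp add: algebra_simps)
        qed
        have "(1 - mu) * ux - mu * d = 0" using ux d by (simp add: mu_def field_simps)
        then have yu: "inner (y - p) v = 0" and yw: "inner (y - p) w = (1 - mu) * sx + mu * sz"
          using inv[of "(1 - mu) * sx + mu * sz" 0] inw[of "(1 - mu) * sx + mu * sz" 0] ye by auto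
        have "- rm \<le> (1 - mu) * sx + mu * sz" using chord_min[OF yK yu] yw by simp
        moreover have "(1 - mu) * sx + mu * sz = sx + mu * (sz - sx)" by (simp add: algebra_simps)
        moreover have "mu * (sz - sx) \<le> L - rm"
        proof -
          have sxB: "\<bar>sx\<bar> \<le> Bd" using sbound[OF xK] by (simp add: sx_def)
          have "mu \<le> ux / d" using ux d by (simp add: mu_def frac_le)
          also have "\<dots> \<le> tau * Bd / d"
          proof -
            have "tau * (- sx) \<le> tau * Bd" using sxB tau by (intro mult_left_mono) (auto simp: abs_le_iff)
            then have "ux \<le> tau * Bd" using sx(2) by simp
            then show ?thesis using d by (simp add: divide_right_mono)
          qed
          finally have muB: "mu \<le> tau * Bd / d" .
          have "sz - sx \<le> 2 * Bd" using sxB szB by (simp add: abs_le_iff)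
          then have "mu * (sz - sx) \<le> mu * (2 * Bd)" using mu by (intro mult_left_mono) auto
          also have "\<dots> \<le> tau * Bd / d * (2 * Bd)" using muB Bd by (intro mult_right_mono) auto
          also have "\<dots> \<le> L - rm" by (rule tau4)
          finally show ?thesis .
        qed
        ultimately show False using sxl by linarith
      qed
      define l2 where "l2 = ux / (tau * L)"
      define l1 where "l1 = - sx / L - ux / (tau * L)"
      have "l1 *\<^sub>R X' + l2 *\<^sub>R Y' = (- L * (l1 + l2)) *\<^sub>R w + (tau * L * l2) *\<^sub>R v"
        by (simp add: X'_def Y'_def algebra_simps)
      also have "- L * (l1 + l2) = sx" using L by (simp add: l1_def l2_def field_simps)
      also have "tau * L * l2 = ux" using L tau by (simp add: l2_def)
      finally have xD: "x = p + l1 *\<^sub>R X' + l2 *\<^sub>R Y'" using xe by (simp add: algebra_simps)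
      have "0 \<le> l2" using ux tau L by (simp add: l2_def)
      moreover have "0 \<le> l1"
      proof -
        have "ux / (tau * L) \<le> (- tau * sx) / (tau * L)" using sx tau L by (intro divide_right_mono) auto
        also have "\<dots> = - sx / L" using tau by simp
        finally show ?thesis by (simp add: l1_def)
      qed
      moreover have "l1 + l2 \<le> 1" using sxL L by (simp add: l1_def l2_def field_simps)
      ultimately have "x \<in> D" unfolding D_def xD using in_tri[of l1 l2 p X' Y'] by simp
      then show ?thesis by simp
    qed
  qed
  have Omeas: "Ob \<in> lmeasurable" unfolding Ob_def by (rule hK_meas)
  have TO: "T \<subseteq> Ob" using TK Tu by (auto simp: Ob_def inner_diff_left)
  have mO: "measure lebesgue Ob = a * A" using Fp by (simp add: F_def Ob_def)
  have Tm: "T \<in> lmeasurable" unfolding T_def by (rule tri_lmeas)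
  have Dm: "D \<in> lmeasurable" unfolding D_def by (rule tri_lmeas)
  have OTm: "Ob - T \<in> lmeasurable" by (rule fmeasurable_Diff[OF Omeas fmeasurableD[OF Tm]])
  have pm: "{p} \<in> lmeasurable" by (rule lmeasurable_compact) simp
  have U1: "(Ob - T) \<union> {p} \<in> lmeasurable" using OTm pm by (rule fmeasurable.Un)
  have U2: "(Ob - T) \<union> {p} \<union> D \<in> lmeasurable" using U1 Dm by (rule fmeasurable.Un)
  have Nm: "N \<in> lmeasurable" unfolding N_def by (rule hK_meas)
  have "measure lebesgue N \<le> measure lebesgue ((Ob - T) \<union> {p} \<union> D)"
    using Nsub Nm U2 by (intro measure_mono_fmeasurable) auto
  also have "\<dots> \<le> measure lebesgue ((Ob - T) \<union> {p}) + measure lebesgue D"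
    using U1 Dm by (intro measure_Un_le) auto
  also have "measure lebesgue ((Ob - T) \<union> {p}) \<le> measure lebesgue (Ob - T) + measure lebesgue {p}"
    using OTm pm by (intro measure_Un_le) auto
  also have "measure lebesgue (Ob - T) = a * A - kap * tau * rho^2 / 2"
    using TO mO mT
    by (subst measure_Diff) (auto intro!: fmeasurableD2[OF Omeas] fmeasurableD[OF Omeas] fmeasurableD[OF Tm])
  finally have mN: "measure lebesgue N \<le> a * A - kap * tau * rho^2 / 2 + tau * L^2 / 2"
    using mD by simp
  have "tau * L^2 < tau * (kap * rho^2)" using kapL tau by simp
  then have mN2: "measure lebesgue N < a * A" using mN by (simp add: algebra_simps)
  have nn: "norm n > 0"
  proof -
    have "inner n v = 1" using vv pp(2) pp(3) by (simp add: n_def inner_add_left)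
    then show ?thesis by (metis inner_zero_left zero_less_norm_iff zero_neq_one)
  qed
  define v' where "v' = (1 / norm n) *\<^sub>R n"
  have v': "norm v' = 1" using nn by (simp add: v'_def)
  have "{x. inner x v' \<le> inner p v'} = {x. inner x n \<le> inner p n}"
    using nn by (auto simp: v'_def divide_right_mono divide_le_cancel)
  then have "F v' (inner p v') = measure lebesgue N" by (simp add: F_def N_def)
  moreover have "a * A \<le> F v' (inner p v')" using p v' by (auto simp: core_def)
  ultimately show False using mN2 by simp
qed
end


context cbody begin

lemma touch:
  assumes a: "0 < a" "a < 1" and m: "m \<in> core a" and mi: "m \<notin> interior (core a)"
  shows "\<exists>v. norm v = 1 \<and> F v (inner m v) = a * A"
proof -
  have ex: "\<exists>yv. dist (fst yv) m < 1 / (real n + 1) \<and> norm (snd yv) = 1 \<and> F (snd yv) (inner (fst yv) (snd yv)) < a * A" for n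
  proof -
    have pos: "1 / (real n + 1) > 0" by simp
    have "\<not> ball m (1 / (real n + 1)) \<subseteq> core a" using mi mem_interior[of m "core a"] pos by blast
    then obtain y where y: "y \<in> ball m (1 / (real n + 1))" "y \<notin> core a" by blast
    then obtain v where "norm v = 1" "\<not> a * A \<le> F v (inner y v)" by (auto simp: core_def)
    then show ?thesis using y(1) by (intro exI[of _ "(y, v)"]) (auto simp: dist_commute)
  qed
  then obtain f where f: "\<And>n. dist (fst (f n)) m < 1 / (real n + 1) \<and> norm (snd (f n)) = 1 \<and> F (snd (f n)) (inner (fst (f n)) (snd (f n))) < a * A"
    by metis
  define Y where "Y n = fst (f n)" for n
  define V where "V n = snd (f n)" for n
  have Yd: "dist (Y n) m < 1 / (real n + 1)" and Vn: "norm (V n) = 1" and FY: "F (V n) (inner (Y n) (V n)) < a * A" for n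
    using f[of n] by (auto simp: Y_def V_def)
  have "seq_compact (sphere (0::real^2) 1)" by (intro compact_imp_seq_compact compact_sphere)
  moreover have "\<forall>n. V n \<in> sphere 0 1" using Vn by simp
  ultimately obtain l r where l: "l \<in> sphere 0 1" "strict_mono r" "(V \<circ> r) \<longlonglongrightarrow> l"
    by (rule seq_compactE)
  have nl: "norm l = 1" using l(1) by simp
  have mK: "m \<in> K" using m core_sub_K[OF a(1)] by auto
  define s where "s = inner m l"
  have ge: "a * A \<le> F l s" using m nl by (auto simp: core_def s_def)
  have le: "F l s \<le> a * A"
  proof (rule ccontr)
    assume "\<not> F l s \<le> a * A"
    then have gt: "a * A < F l s" by simp
    define e where "e = (F l s - a * A) / (4 * Rad)"
    have e: "e > 0" using gt Rad(1) by (simp add: e_def)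
    have Fe: "a * A < F l (s - e)"
    proof -
      have "F l s \<le> F l (s - e) + 2 * Rad * e" using F_lip[OF nl, of "s - e" s] e by simp
      moreover have "2 * (2 * Rad * e) = F l s - a * A" using Rad(1) by (simp add: e_def)
      ultimately show ?thesis using gt by linarith
    qed
    define dl where "dl = e / (8 * Rad)"
    have dl: "dl > 0" using e Rad(1) by (simp add: dl_def)
    obtain N where N: "\<forall>n\<ge>N. dist ((V \<circ> r) n) l < dl" using l(3) dl by (metis LIMSEQ_def)
    obtain N1 :: nat where N1: "1 / (real N1 + 1) < e / 2"
    proof -
      obtain k :: nat where "2 / e < real k" using reals_Archimedean2 by blast
      then have "1 / (real k + 1) < e / 2" using e by (simp add: field_simps)
      then show ?thesis using that by blast
    qed
    define n where "n = max N N1"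
    define y where "y = Y (r n)"
    define vn where "vn = V (r n)"
    have vnl: "norm (vn - l) < dl" using N by (simp add: n_def vn_def dist_norm)
    have "r n \<ge> n" using seq_suble[OF l(2)] by simp
    then have "1 / (real (r n) + 1) \<le> 1 / (real N1 + 1)" by (simp add: n_def frac_le)
    then have ym: "norm (y - m) < e / 2" using Yd[of "r n"] N1 by (simp add: y_def dist_norm)
    have nvn: "norm vn = 1" using Vn by (simp add: vn_def)
    have sub: "K \<inter> {x. inner x l \<le> s - e} \<subseteq> K \<inter> {x. inner x vn \<le> inner y vn}"
    proof
      fix x assume x: "x \<in> K \<inter> {x. inner x l \<le> s - e}"
      have "norm x * norm (vn - l) \<le> Rad * dl"
        using Rad(2)[of x] x vnl Rad(1) by (intro mult_mono) auto
      then have "\<bar>inner x (vn - l)\<bar> \<le> Rad * dl"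
        using Cauchy_Schwarz_ineq2[of x "vn - l"] by linarith
      then have "inner x vn \<le> s - e + Rad * dl" using x by (simp add: inner_diff_right abs_le_iff)
      moreover have "\<bar>inner (y - m) vn\<bar> \<le> e / 2" using Cauchy_Schwarz_ineq2[of "y - m" vn] nvn ym by simp
      moreover have "\<bar>inner m (vn - l)\<bar> \<le> Rad * dl"
      proof -
        have "norm m * norm (vn - l) \<le> Rad * dl"
          using Rad(2)[OF mK] vnl Rad(1) by (intro mult_mono) auto
        then show ?thesis using Cauchy_Schwarz_ineq2[of m "vn - l"] by linarith
      qed
      moreover have "inner y vn = s + inner (y - m) vn + inner m (vn - l)"
        by (simp add: s_def inner_diff_left inner_diff_right)
      moreover have "Rad * dl = e / 8" using Rad(1) by (simp add: dl_def)
      ultimately have "inner x vn \<le> inner y vn" using e by (simp add: abs_le_iff)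
      then show "x \<in> K \<inter> {x. inner x vn \<le> inner y vn}" using x by simp
    qed
    have "F l (s - e) \<le> F vn (inner y vn)" unfolding F_def
      using sub hK_meas by (intro measure_mono_fmeasurable) auto
    moreover have "F vn (inner y vn) < a * A" using FY by (simp add: y_def vn_def)
    ultimately show False using Fe by simp
  qed
  show ?thesis using ge le nl by (intro exI[of _ l]) (simp add: s_def)
qed

lemma no_segment:
  assumes al: "0 < al" "al < 1" and ab: "a \<noteq> b" and seg: "closed_segment a b \<subseteq> frontier (core al)"
  shows False
proof -
  have fc: "frontier (core al) \<subseteq> core al" by (rule frontier_subset_closed[OF core_closed])
  define m where "m = midpoint a b"
  have mf: "m \<in> frontier (core al)" using seg by (auto simp: m_def)
  then have mc: "m \<in> core al" and mi: "m \<notin> interior (core al)" using fc by (auto simp: frontier_def)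
  have ac: "a \<in> core al" and bc: "b \<in> core al" using seg fc ends_in_segment[of a b] by auto
  obtain v where v: "norm v = 1" and Fm: "F v (inner m v) = al * A" using touch[OF al mc mi] by blast
  have mv: "inner m v = (inner a v + inner b v) / 2" by (simp add: m_def midpoint_def inner_add_left)
  have aA: "0 < al * A" "al * A < A" using al A_pos by auto
  have geq: "inner m v \<le> inner x v" if "x \<in> core al" for x
  proof (rule ccontr)
    assume "\<not> inner m v \<le> inner x v"
    moreover have "al * A \<le> F v (inner x v)" using that v by (auto simp: core_def)
    ultimately have "F v (inner x v) < F v (inner m v)" using aA Fm by (intro F_strict[OF v]) auto
    then show False using Fm \<open>al * A \<le> F v (inner x v)\<close> by simp
  qed
  have av: "inner a v = inner m v" and bv: "inner b v = inner m v" using geq[OF ac] geq[OF bc] mv by auto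
  define C where "C = K \<inter> {x. inner x v = inner m v}"
  have cC: "compact C" unfolding C_def
    by (intro compact_Int_closed cK closed_hyperplane[of v "inner m v", simplified inner_commute])
  have aK: "a \<in> K" using ac core_sub_K[OF al(1)] by auto
  have CnE: "C \<noteq> {}" using aK av by (auto simp: C_def)
  define w where "w = perp v"
  have w1: "w = perp v \<or> w = - perp v" and w2: "- w = perp v \<or> - w = - perp v" by (auto simp: w_def)
  have ci: "continuous_on C (\<lambda>x. inner x w)" by (intro continuous_intros)
  obtain e1 where e1: "e1 \<in> C" "\<forall>y\<in>C. inner e1 w \<le> inner y w"
    using continuous_attains_inf[OF cC CnE ci] by blast
  obtain e2 where e2: "e2 \<in> C" "\<forall>y\<in>C. inner y w \<le> inner e2 w"
    using continuous_attains_sup[OF cC CnE ci] by blast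
  have mid: "2 * inner p w = inner e1 w + inner e2 w" if pc: "p \<in> core al" and pv: "inner p v = inner m v" for p
  proof -
    have Fp: "F v (inner p v) = al * A" using pv Fm by simp
    have r1: "inner e2 w - inner p w \<le> inner p w - inner e1 w"
      by (rule rotate_contra[OF al v w1 pc Fp]) (use e1 e2 pv in \<open>auto simp: C_def\<close>)
    have r2: "inner e1 (- w) - inner p (- w) \<le> inner p (- w) - inner e2 (- w)"
      by (rule rotate_contra[OF al v w2 pc Fp]) (use e1 e2 pv in \<open>auto simp: C_def\<close>)
    show ?thesis using r1 r2 by simp
  qed
  have "inner a w = inner b w" using mid[OF ac av] mid[OF bc bv] by simp
  then have "a = b" using expand2[OF v w1, of a] expand2[OF v w1, of b] av bv by simp
  then show False using ab by simp
qed

end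



theorem mainTheorem8:
  fixes K :: "(real^2) set"
  assumes "compact K" and "convex K" and "interior K \<noteq> {}"
  shows "\<exists>\<alpha>K. 0 < \<alpha>K \<and> \<alpha>K \<le> 1/2 \<and>
     (\<forall>\<alpha>. 0 < \<alpha> \<and> \<alpha> < \<alpha>K \<longrightarrow>
        strictly_convex (alpha_core K \<alpha>) \<and> interior (alpha_core K \<alpha>) \<noteq> {}) \<and>
     (\<exists>p. alpha_core K \<alpha>K = {p}) \<and>
     (\<forall>\<alpha>. \<alpha>K < \<alpha> \<and> \<alpha> < 1 \<longrightarrow> alpha_core K \<alpha> = {})"
proof -
  interpret cbody K using assms by unfold_locales
  define S where "S = {al. 0 < al \<and> al < 1 \<and> core al \<noteq> {}}"
  define aK where "aK = Sup S"
  have Sle: "al \<le> 1/2" if "al \<in> S" for al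
    using that core_half by (force simp: S_def)
  have bdd: "bdd_above S" unfolding bdd_above_def using Sle by blast
  obtain c r where r: "r > 0" "cball c r \<subseteq> K" by (rule ball_in_K)
  define a0 where "a0 = min (1/4) (r^2 / (16 * A))"
  have a0: "0 < a0" "a0 \<le> 1/4" "a0 * A \<le> r^2/16"
  proof -
    show "0 < a0" using r A_pos by (simp add: a0_def)
    show "a0 \<le> 1/4" unfolding a0_def by (rule min.cobounded1)
    have "a0 \<le> r^2 / (16 * A)" unfolding a0_def by (rule min.cobounded2)
    then show "a0 * A \<le> r^2/16" using A_pos by (simp add: le_divide_eq)
  qed
  have "c \<in> core a0" unfolding core_def
  proof (intro CollectI allI impI)
    fix v :: "real^2" assume v: "norm v = 1"
    have "F v (inner c v - r/2) + r^2/8 \<le> F v (inner c v)" by (rule core_grow[OF r v])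
    moreover have "0 \<le> F v (inner c v - r/2)" by (rule F_nonneg)
    moreover have "0 \<le> r^2" by simp
    ultimately show "a0 * A \<le> F v (inner c v)" using a0(3) by linarith
  qed
  then have a0S: "a0 \<in> S" using a0 by (auto simp: S_def)
  have SnE: "S \<noteq> {}" using a0S by auto
  have aK0: "0 < aK" using cSup_upper[OF a0S bdd] a0 by (simp add: aK_def)
  have aK1: "aK \<le> 1/2" unfolding aK_def using SnE Sle by (rule cSup_least)
  have below: "\<exists>b\<in>S. al < b" if "al < aK" for al
    using that less_cSup_iff[OF SnE bdd] by (simp add: aK_def)
  have above: "b \<le> aK" if "b \<in> S" for b using cSup_upper[OF that bdd] by (simp add: aK_def)
  have P1: "strictly_convex (alpha_core K al) \<and> interior (alpha_core K al) \<noteq> {}" if al: "0 < al" "al < aK" for al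
  proof -
    have al1: "al < 1" using al aK1 by simp
    obtain b where b: "b \<in> S" "al < b" using below[OF al(2)] by blast
    then obtain x where x: "x \<in> core b" by (auto simp: S_def)
    have "cball x ((b - al) * A / (2 * Rad)) \<subseteq> core al" by (rule core_gap[OF b(2) x])
    moreover have "(b - al) * A / (2 * Rad) > 0" using b A_pos Rad(1) by simp
    ultimately have "x \<in> interior (core al)" by (auto simp: mem_interior_cball)
    then have i: "interior (alpha_core K al) \<noteq> {}" using core_eq[OF al(1) al1] by auto
    have "strictly_convex (core al)" unfolding strictly_convex_def
      using core_convex no_segment[OF al(1) al1] by blast
    then show ?thesis using i core_eq[OF al(1) al1] by simp
  qed
  have P3: "alpha_core K al = {}" if al: "aK < al" "al < 1" for al
  proof -
    have "core al = {}"
    proof (rule ccontr)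
      assume "core al \<noteq> {}"
      then have "al \<in> S" using al aK0 by (auto simp: S_def)
      then show False using above al by force
    qed
    then show ?thesis using core_eq[of al] al aK0 by simp
  qed
  have aK1': "aK < 1" using aK1 by simp
  define Fam where "Fam = core ` {b. aK / 2 \<le> b \<and> b < aK}"
  have "K \<inter> \<Inter>Fam \<noteq> {}"
  proof (rule compact_imp_fip[OF cK])
    show "closed T" if "T \<in> Fam" for T using that core_closed by (auto simp: Fam_def)
  next
    fix G assume G: "finite G" "G \<subseteq> Fam"
    show "K \<inter> \<Inter>G \<noteq> {}"
    proof (cases "G = {}")
      case True then show ?thesis using r by auto
    next
      case False
      obtain B where B: "finite B" "B \<subseteq> {b. aK / 2 \<le> b \<and> b < aK}" "G = core ` B"
        using G unfolding Fam_def by (meson finite_subset_image)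
      have BnE: "B \<noteq> {}" using False B by auto
      define b0 where "b0 = Max B"
      have b0: "b0 \<in> B" using B BnE by (simp add: b0_def)
      have b0ge: "b \<le> b0" if "b \<in> B" for b using B that by (simp add: b0_def)
      obtain b' where b': "b' \<in> S" "b0 < b'" using below b0 B by blast
      then obtain x where x: "x \<in> core b'" by (auto simp: S_def)
      have "x \<in> core b" if "b \<in> B" for b using x core_mono[of b b'] b0ge[OF that] b' by auto
      moreover have "x \<in> K" using x core_sub_K[of b'] b' by (auto simp: S_def)
      ultimately show ?thesis using B by auto
    qed
  qed
  then obtain x where x: "x \<in> K" "x \<in> \<Inter>Fam" by auto
  have xc: "x \<in> core aK" unfolding core_def
  proof (intro CollectI allI impI)
    fix v :: "real^2" assume v: "norm v = 1"
    show "aK * A \<le> F v (inner x v)"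
    proof (rule ccontr)
      assume "\<not> aK * A \<le> F v (inner x v)"
      then have lt: "F v (inner x v) / A < aK" using A_pos by (simp add: divide_less_eq)
      define b where "b = max (aK / 2) ((F v (inner x v) / A + aK) / 2)"
      have b: "aK / 2 \<le> b" "b < aK" "F v (inner x v) / A < b"
      proof -
        show "aK / 2 \<le> b" unfolding b_def by (rule max.cobounded1)
        show "b < aK" unfolding b_def using lt aK0 by (simp add: field_simps)
        have "F v (inner x v) / A < (F v (inner x v) / A + aK) / 2" using lt by (simp add: field_simps)
        also have "\<dots> \<le> b" unfolding b_def by (rule max.cobounded2)
        finally show "F v (inner x v) / A < b" .
      qed
      then have "x \<in> core b" using x(2) by (auto simp: Fam_def)
      then have "b * A \<le> F v (inner x v)" using v by (auto simp: core_def)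
      then show False using b(3) A_pos by (simp add: divide_less_eq)
    qed
  qed
  have int0: "interior (core aK) = {}"
  proof (rule ccontr)
    assume "interior (core aK) \<noteq> {}"
    then obtain c' where "c' \<in> interior (core aK)" by auto
    then obtain r' where r': "r' > 0" "cball c' r' \<subseteq> core aK" using mem_interior_cball by blast
    have r'K: "cball c' r' \<subseteq> K" using r' core_sub_K[OF aK0] by auto
    define b where "b = aK + min (1/4) (r'^2 / (8 * A))"
    have bd: "b - aK \<le> 1/4" "(b - aK) * A \<le> r'^2/8" "aK < b"
    proof -
      show "b - aK \<le> 1/4" unfolding b_def by simp
      have "b - aK \<le> r'^2 / (8 * A)" unfolding b_def by simp
      then show "(b - aK) * A \<le> r'^2/8" using A_pos by (simp add: le_divide_eq)
      show "aK < b" using r' A_pos by (simp add: b_def)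
    qed
    have "c' \<in> core b" unfolding core_def
    proof (intro CollectI allI impI)
      fix v :: "real^2" assume v: "norm v = 1"
      have g: "F v (inner c' v - r'/2) + r'^2/8 \<le> F v (inner c' v)" by (rule core_grow[OF r'(1) r'K v])
      have "c' - (r'/2) *\<^sub>R v \<in> cball c' r'" using v r'(1) by (simp add: dist_norm)
      then have "c' - (r'/2) *\<^sub>R v \<in> core aK" using r'(2) by auto
      then have "aK * A \<le> F v (inner (c' - (r'/2) *\<^sub>R v) v)" using v by (auto simp: core_def)
      moreover have "inner (c' - (r'/2) *\<^sub>R v) v = inner c' v - r'/2" using v by (simp add: inner_diff_left dot_square_norm)
      ultimately have "aK * A + r'^2/8 \<le> F v (inner c' v)" using g by simp
      moreover have "b * A = aK * A + (b - aK) * A" by (simp add: algebra_simps)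
      ultimately show "b * A \<le> F v (inner c' v)" using bd(2) by linarith
    qed
    moreover have "b < 1" using bd(1) aK1 by simp
    ultimately have "b \<in> S" using bd(3) aK0 by (auto simp: S_def)
    then show False using above bd(3) by force
  qed
  have P2: "\<exists>p. alpha_core K aK = {p}"
  proof (intro exI[of _ x])
    have "core aK = {x}"
    proof (rule ccontr)
      assume "core aK \<noteq> {x}"
      then obtain y where y: "y \<in> core aK" "y \<noteq> x" using xc by blast
      have "frontier (core aK) = core aK"
        using core_closed int0 by (simp add: frontier_def closure_closed)
      moreover have "closed_segment x y \<subseteq> core aK"
        using xc y(1) core_convex by (simp add: closed_segment_subset)
      ultimately show False using no_segment[OF aK0 aK1' y(2)[symmetric]] by simp
    qed
    then show "alpha_core K aK = {x}" using core_eq[OF aK0 aK1'] by simp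
  qed
  show ?thesis using aK0 aK1 P1 P2 P3 by blast
qed


end
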